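(* Let $d\ge1$, $m\ge1$, $\nu\ge2$ be integers, $\Lambda\subset\mathbb Z^d$ finite, containing $\mathbf 0$ and symmetric, $\boldsymbol\Sigma=\{\Sigma_{\mathbf k}\}_{\mathbf k\in\Lambda}$ with $\Sigma_{-\mathbf k}=\Sigma_{\mathbf k}^*\in\mathbb C^{m\times m}$, and $\Psi$ an $m\times m$ matrix-valued function on $\mathbb T^d$ with rational entries which is bounded and coercive. If the Feasibility Assumption holds, then there exists a real number $\alpha$ such that $\langle\mathbf Q,\boldsymbol\Sigma\rangle\ge\alpha$ for every $\mathbf Q\in\mathscr L_+$.
   Context: $\mathbb T^d=(-\pi,\pi]^d$; bounded and coercive means $aI_m\le\Psi(e^{i\boldsymbol\theta})\le bI_m$ for all $\boldsymbol\theta$, for some $b>a>0$. For $\mathbf Q=\{Q_{\mathbf k}\}_{\mathbf k\in\Lambda}$, $Q_{\mathbf k}\in\mathbb C^{m\times m}$, $Q_{-\mathbf k}=Q_{\mathbf k}^*$: $Q(e^{i\boldsymbol\theta})=\sum_{\mathbf k}Q_{\mathbf k}e^{-i\langle\mathbf k,\boldsymbol\theta\rangle}$, $\langle\mathbf k,\boldsymbol\theta\rangle=\sum_jk_j\theta_j$, $\langle\mathbf Q,\boldsymbol\Sigma\rangle=\sum_{\mathbf k}\operatorname{tr}(Q_{\mathbf k}\Sigma_{\mathbf k}^* )$. $\mathscr L_+=\{\mathbf Q:\nu\Psi^{-1}+Q\ge0\text{ on }\mathbb T^d,\ \text{not identically zero}\}$. Feasibility Assumption: there exists a Hermitian nonnegative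 definite matrix-valued measure $M_0$ on $\mathbb T^d$ with $\int e^{i\langle\mathbf k,\boldsymbol\theta\rangle}\mathrm dM_0=\Sigma_{\mathbf k}$ for all $\mathbf k\in\Lambda$, and a nonnegative scalar measure $\lambda$ with $\mathrm dM_0=M'_{0,\lambda}\mathrm d\lambda$ where $M'_{0,\lambda}$ is positive definite on some open ball $B\subset\mathbb T^d$ with $\lambda(B)>0$. *)

theory Defs
  imports "HOL-Analysis.Analysis"
begin

definition torus :: "(real^'d) set" where
  "torus = {\<theta>. \<forall>j. - pi < \<theta> $ j \<and> \<theta> $ j \<le> pi}"

definition ipair :: "int^'d \<Rightarrow> real^'d \<Rightarrow> real" where
  "ipair k \<theta> = (\<Sum>j\<in>UNIV. real_of_int (k $ j) * \<theta> $ j)"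

definition adjoint_mat :: "complex^'m^'m \<Rightarrow> complex^'m^'m" where
  "adjoint_mat A = (\<chi> i j. cnj (A $ j $ i))"

definition hermitian_mat :: "complex^'m^'m \<Rightarrow> bool" where
  "hermitian_mat A \<longleftrightarrow> adjoint_mat A = A"

definition psd_mat :: "complex^'m^'m \<Rightarrow> bool" where
  "psd_mat A \<longleftrightarrow> hermitian_mat A \<and>
     (\<forall>x::complex^'m. 0 \<le> Re (\<Sum>i\<in>UNIV. \<Sum>j\<in>UNIV. cnj (x $ i) * A $ i $ j * x $ j))"

definition pd_mat :: "complex^'m^'m \<Rightarrow> bool" where
  "pd_mat A \<longleftrightarrow> hermitian_mat A \<and>
     (\<forall>x::complex^'m. x \<noteq> 0 \<longrightarrow> 0 < Re (\<Sum>i\<in>UNIV. \<Sum>j\<in>UNIV. cnj (x $ i) * A $ i $ j * x $ j))"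

definition cmat_scale :: "complex \<Rightarrow> complex^'m^'m \<Rightarrow> complex^'m^'m" where
  "cmat_scale c A = (\<chi> i j. c * A $ i $ j)"

definition loewner_le :: "complex^'m^'m \<Rightarrow> complex^'m^'m \<Rightarrow> bool" where
  "loewner_le A B \<longleftrightarrow> psd_mat (B - A)"

definition trig_poly :: "(int^'d) set \<Rightarrow> (int^'d \<Rightarrow> complex) \<Rightarrow> real^'d \<Rightarrow> complex" where
  "trig_poly K c \<theta> = (\<Sum>k\<in>K. c k * exp (\<i> * complex_of_real (ipair k \<theta>)))"

text \<open>A scalar function on T^d is rational (a rational function of e^{i theta_1},...,e^{i theta_d})
  if it is a quotient p/q of trigonometric polynomials, q not identically zero on T^d,
  the quotient representing f wherever q does not vanish.\<close>
definition rational_on_torus :: "(real^'d \<Rightarrow> complex) \<Rightarrow> bool" where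
  "rational_on_torus f \<longleftrightarrow>
     (\<exists>K1 K2 p q. finite K1 \<and> finite K2 \<and> (\<exists>\<theta>\<in>torus. trig_poly K2 q \<theta> \<noteq> 0) \<and>
        (\<forall>\<theta>\<in>torus. trig_poly K2 q \<theta> \<noteq> 0 \<longrightarrow> f \<theta> = trig_poly K1 p \<theta> / trig_poly K2 q \<theta>))"

definition Qfun :: "(int^'d) set \<Rightarrow> (int^'d \<Rightarrow> complex^'m^'m) \<Rightarrow> real^'d \<Rightarrow> complex^'m^'m" where
  "Qfun \<Lambda> Q \<theta> = (\<Sum>k\<in>\<Lambda>. cmat_scale (exp (- \<i> * complex_of_real (ipair k \<theta>))) (Q k))"

definition pairing :: "(int^'d) set \<Rightarrow> (int^'d \<Rightarrow> complex^'m^'m) \<Rightarrow> (int^'d \<Rightarrow> complex^'m^'m) \<Rightarrow> complex" where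
  "pairing \<Lambda> Q \<Sigma> = (\<Sum>k\<in>\<Lambda>. trace (Q k ** adjoint_mat (\<Sigma> k)))"

definition herm_family :: "(int^'d) set \<Rightarrow> (int^'d \<Rightarrow> complex^'m^'m) \<Rightarrow> bool" where
  "herm_family \<Lambda> Q \<longleftrightarrow> (\<forall>k\<in>\<Lambda>. Q (- k) = adjoint_mat (Q k))"

definition Lplus :: "(int^'d) set \<Rightarrow> nat \<Rightarrow> (real^'d \<Rightarrow> complex^'m^'m) \<Rightarrow> (int^'d \<Rightarrow> complex^'m^'m) set" where
  "Lplus \<Lambda> \<nu> \<Psi> = {Q. herm_family \<Lambda> Q \<and>
      (\<forall>\<theta>\<in>torus. psd_mat (cmat_scale (of_nat \<nu>) (matrix_inv (\<Psi> \<theta>)) + Qfun \<Lambda> Q \<theta>)) \<and>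
      (\<exists>\<theta>\<in>torus. cmat_scale (of_nat \<nu>) (matrix_inv (\<Psi> \<theta>)) + Qfun \<Lambda> Q \<theta> \<noteq> 0)}"

text \<open>The matrix measure M_0 is represented through its density
  F = M'_{0,lambda} w.r.t. the nonnegative scalar measure lambda on T^d (dM_0 = F dlambda);
  Hermitian nonnegativity of M_0 is expressed as F(theta) Hermitian nonnegative definite.\<close>
definition feasible :: "(int^'d) set \<Rightarrow> (int^'d \<Rightarrow> complex^'m^'m) \<Rightarrow> bool" where
  "feasible \<Lambda> \<Sigma> \<longleftrightarrow>
     (\<exists>(mu::(real^'d) measure) (F::real^'d \<Rightarrow> complex^'m^'m).
        sets mu = sets (restrict_space borel torus) \<and>
        (\<forall>i j. integrable mu (\<lambda>\<theta>. F \<theta> $ i $ j)) \<and>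
        (\<forall>\<theta>\<in>torus. psd_mat (F \<theta>)) \<and>
        (\<forall>k\<in>\<Lambda>. \<forall>i j.
            (LINT \<theta>|mu. exp (\<i> * complex_of_real (ipair k \<theta>)) * F \<theta> $ i $ j) = \<Sigma> k $ i $ j) \<and>
        (\<exists>c r. 0 < r \<and> ball c r \<subseteq> torus \<and> emeasure mu (ball c r) > 0 \<and>
               (\<forall>\<theta>\<in>ball c r. pd_mat (F \<theta>))))"

end

theory Submission imports Defs begin

lemma trace_nonneg_pd:
  fixes B F :: "'a \<Rightarrow> 'a \<Rightarrow> complex"
  assumes "finite I"
    and B: "\<And>J x. finite J \<Longrightarrow> 0 \<le> Re (\<Sum>i\<in>J. \<Sum>j\<in>J. cnj (x i) * B i j * x j)"
    and "\<And>i j. F i j = cnj (F j i)"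
    and "\<And>x. (\<exists>i\<in>I. x i \<noteq> 0) \<Longrightarrow> 0 < Re (\<Sum>i\<in>I. \<Sum>j\<in>I. cnj (x i) * F i j * x j)"
  shows "0 \<le> Re (\<Sum>i\<in>I. \<Sum>j\<in>I. B i j * F j i)"
  using assms(1,3,4)
proof (induction I arbitrary: F rule: finite_induct)
  case empty
  show ?case by simp
next
  case (insert a A F)
  note H = insert.prems(1) and P = insert.prems(2)
  define d where "d = F a a"
  have dc: "cnj d = d" using H[of a a] unfolding d_def by simp
  have dre: "d = of_real (Re d)" using dc by (simp add: complex_eq_iff)
  have "0 < Re (\<Sum>i\<in>insert a A. \<Sum>j\<in>insert a A. cnj (if i = a then 1 else 0) * F i j * (if j = a then 1 else 0))"
    by (rule P) auto
  also have "(\<Sum>i\<in>insert a A. \<Sum>j\<in>insert a A. cnj (if i = a then 1 else 0) * F i j * (if j = a then 1 else 0)) = d"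
    using insert.hyps by (simp add: d_def if_distrib cong: if_cong, intro sum.neutral, auto)
  finally have dpos: "0 < Re d" .
  have d0: "d \<noteq> 0" using dpos by auto
  define F' where "F' i j = F i j - F i a * F a j / d" for i j
  have H': "F' i j = cnj (F' j i)" for i j
  proof -
    have e1: "cnj (F j i) = F i j" using H[of i j] by simp
    have e2: "cnj (F j a) = F a j" using H[of a j] by simp
    have e3: "cnj (F a i) = F i a" using H[of i a] by simp
    show ?thesis unfolding F'_def using dc by (simp add: e1 e2 e3 mult.commute)
  qed
  have P': "0 < Re (\<Sum>i\<in>A. \<Sum>j\<in>A. cnj (x i) * F' i j * x j)" if ex: "\<exists>i\<in>A. x i \<noteq> 0" for x
  proof -
    define u where "u = (\<Sum>j\<in>A. F a j * x j)"
    define S where "S = (\<Sum>i\<in>A. \<Sum>j\<in>A. cnj (x i) * F i j * x j)"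
    define y where "y = x(a := - u / d)"
    have yA: "\<And>i. i \<in> A \<Longrightarrow> y i = x i" unfolding y_def using insert.hyps by auto
    have cFa: "cnj (F a i) = F i a" for i using H[of i a] by simp
    have cu: "cnj u = (\<Sum>i\<in>A. cnj (x i) * F i a)"
      unfolding u_def by (simp add: H[of a] mult.commute)
    have R: "(\<Sum>i\<in>A. \<Sum>j\<in>A. cnj (x i) * F' i j * x j) = S - cnj u * u / d"
      unfolding F'_def S_def u_def
      by (simp add: cFa algebra_simps sum_subtractf sum_distrib_left sum_distrib_right sum_divide_distrib)
    have L: "(\<Sum>i\<in>insert a A. \<Sum>j\<in>insert a A. cnj (y i) * F i j * y j)
       = cnj (y a) * d * y a + cnj (y a) * u + (\<Sum>i\<in>A. cnj (x i) * F i a) * y a + S"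
      using insert.hyps yA unfolding S_def u_def d_def
      by (simp add: sum.distrib sum_distrib_left sum_distrib_right algebra_simps cong: sum.cong)
    have "(\<Sum>i\<in>insert a A. \<Sum>j\<in>insert a A. cnj (y i) * F i j * y j) = S - cnj u * u / d"
      unfolding L cu[symmetric] using d0 dc by (simp add: y_def field_simps)
    moreover have "0 < Re (\<Sum>i\<in>insert a A. \<Sum>j\<in>insert a A. cnj (y i) * F i j * y j)"
      using ex yA by (intro P) auto
    ultimately show ?thesis using R by simp
  qed
  have IH: "0 \<le> Re (\<Sum>i\<in>A. \<Sum>j\<in>A. B i j * F' j i)"
    by (rule insert.IH[of F', OF H' P'])
  define s where "s = complex_of_real (sqrt (Re d))"
  have ss: "cnj s * s = d" unfolding s_def using dpos
    by (subst dre) (simp flip: of_real_mult)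
  have s0: "s \<noteq> 0" using ss d0 by auto
  define w where "w j = F j a / s" for j
  have split: "B i j * F j i = B i j * F' j i + cnj (w i) * B i j * w j" for i j
    unfolding F'_def w_def using d0 s0 ss by (simp add: H[of i a] field_simps)
  have Fa1: "F' a i = 0" for i unfolding F'_def d_def using d0 d_def by simp
  have Fa2: "F' j a = 0" for j unfolding F'_def d_def using d0 d_def by simp
  have "(\<Sum>i\<in>insert a A. \<Sum>j\<in>insert a A. B i j * F' j i) = (\<Sum>i\<in>A. \<Sum>j\<in>A. B i j * F' j i)"
    using insert.hyps by (simp add: Fa1 Fa2)
  moreover have "(\<Sum>i\<in>insert a A. \<Sum>j\<in>insert a A. B i j * F j i) =
     (\<Sum>i\<in>insert a A. \<Sum>j\<in>insert a A. B i j * F' j i) + (\<Sum>i\<in>insert a A. \<Sum>j\<in>insert a A. cnj (w i) * B i j * w j)"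
    by (simp add: split sum.distrib)
  moreover have "0 \<le> Re (\<Sum>i\<in>insert a A. \<Sum>j\<in>insert a A. cnj (w i) * B i j * w j)"
    using B[of "insert a A" w] insert.hyps by blast
  ultimately show ?case using IH by simp
qed


lemma Re_cnj_mult_self: "Re (cnj z * z) = (cmod z)^2"
  by (simp add: cmod_def power2_eq_square)

lemma trace_nonneg_psd:
  fixes B F :: "'a \<Rightarrow> 'a \<Rightarrow> complex"
  assumes fin: "finite I"
    and B: "\<And>J x. finite J \<Longrightarrow> 0 \<le> Re (\<Sum>i\<in>J. \<Sum>j\<in>J. cnj (x i) * B i j * x j)"
    and H: "\<And>i j. F i j = cnj (F j i)"
    and P: "\<And>x. 0 \<le> Re (\<Sum>i\<in>I. \<Sum>j\<in>I. cnj (x i) * F i j * x j)"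
  shows "0 \<le> Re (\<Sum>i\<in>I. \<Sum>j\<in>I. B i j * F j i)"
proof (rule ccontr)
  define T where "T = Re (\<Sum>i\<in>I. \<Sum>j\<in>I. B i j * F j i)"
  define c where "c = Re (\<Sum>i\<in>I. B i i)"
  assume "\<not> 0 \<le> Re (\<Sum>i\<in>I. \<Sum>j\<in>I. B i j * F j i)"
  hence Tn: "T < 0" unfolding T_def by simp
  have key: "0 \<le> T + e * c" if e: "e > 0" for e
  proof -
    define Fe where "Fe i j = F i j + (if i = j then complex_of_real e else 0)" for i j
    have He: "Fe i j = cnj (Fe j i)" for i j
      unfolding Fe_def using H[of i j] by auto
    have Pe: "0 < Re (\<Sum>i\<in>I. \<Sum>j\<in>I. cnj (x i) * Fe i j * x j)" if ex: "\<exists>i\<in>I. x i \<noteq> 0" for x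
    proof -
      have eq: "(\<Sum>i\<in>I. \<Sum>j\<in>I. cnj (x i) * Fe i j * x j)
          = (\<Sum>i\<in>I. \<Sum>j\<in>I. cnj (x i) * F i j * x j) + of_real e * (\<Sum>i\<in>I. cnj (x i) * x i)"
      proof -
        have pw: "cnj (x i) * Fe i j * x j = cnj (x i) * F i j * x j + (if i = j then of_real e * (cnj (x i) * x i) else 0)" for i j
          unfolding Fe_def by (auto simp: algebra_simps)
        show ?thesis unfolding pw sum.distrib using fin by (simp add: sum_distrib_left)
      qed
      obtain i0 where i0: "i0 \<in> I" "x i0 \<noteq> 0" using ex by auto
      have "0 < (\<Sum>i\<in>I. (cmod (x i))^2)"
        by (rule sum_pos2[OF fin i0(1)]) (use i0 in auto)
      hence "0 < Re (\<Sum>i\<in>I. cnj (x i) * x i)" by (simp only: Re_sum Re_cnj_mult_self)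
      hence "0 < e * Re (\<Sum>i\<in>I. cnj (x i) * x i)" using e by simp
      thus ?thesis unfolding eq using P[of x] by simp
    qed
    have "0 \<le> Re (\<Sum>i\<in>I. \<Sum>j\<in>I. B i j * Fe j i)"
      by (rule trace_nonneg_pd[OF fin B He Pe]) auto
    also have "(\<Sum>i\<in>I. \<Sum>j\<in>I. B i j * Fe j i) = (\<Sum>i\<in>I. \<Sum>j\<in>I. B i j * F j i) + of_real e * (\<Sum>i\<in>I. B i i)"
    proof -
      have pw: "B i j * Fe j i = B i j * F j i + (if i = j then of_real e * B i i else 0)" for i j
        unfolding Fe_def by (auto simp: algebra_simps)
      show ?thesis unfolding pw sum.distrib using fin by (simp add: sum_distrib_left)
    qed
    finally show ?thesis unfolding T_def c_def by simp
  qed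
  define e where "e = - T / (2 * (\<bar>c\<bar> + 1))"
  have epos: "e > 0" unfolding e_def using Tn by (intro divide_pos_pos) (auto simp: add_pos_nonneg)
  have "e * \<bar>c\<bar> < - T"
  proof -
    have "e * \<bar>c\<bar> = -T * (\<bar>c\<bar> / (2 * (\<bar>c\<bar> + 1)))" unfolding e_def by simp
    also have "\<bar>c\<bar> / (2 * (\<bar>c\<bar> + 1)) < 1" by simp
    hence "-T * (\<bar>c\<bar> / (2 * (\<bar>c\<bar> + 1))) < -T * 1" using Tn by (intro mult_strict_left_mono) auto
    finally show ?thesis by simp
  qed
  moreover have "e * c \<le> e * \<bar>c\<bar>" using epos by (intro mult_left_mono) auto
  ultimately show False using key[OF epos] by linarith
qed

lemma qf_mv: "(\<Sum>i\<in>UNIV. \<Sum>j\<in>UNIV. cnj (x $ i) * M $ i $ j * x $ j) = (\<Sum>i\<in>UNIV. cnj (x $ i) * (M *v x) $ i)"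
  by (simp add: matrix_vector_mult_def sum_distrib_left mult.assoc)

lemma psd_shift:
  fixes P :: "complex^'m^'m" and a :: real
  assumes "loewner_le (cmat_scale (of_real a) (mat 1)) P"
  shows "a * (\<Sum>i\<in>UNIV. (cmod (y $ i))^2) \<le> Re (\<Sum>i\<in>UNIV. cnj (y $ i) * (P *v y) $ i)"
proof -
  have "0 \<le> Re (\<Sum>i\<in>UNIV. \<Sum>j\<in>UNIV. cnj (y $ i) * (P - cmat_scale (of_real a) (mat 1)) $ i $ j * y $ j)"
    using assms unfolding loewner_le_def psd_mat_def by blast
  also have "(\<Sum>i\<in>UNIV. \<Sum>j\<in>UNIV. cnj (y $ i) * (P - cmat_scale (of_real a) (mat 1)) $ i $ j * y $ j)
     = (\<Sum>i\<in>UNIV. \<Sum>j\<in>UNIV. cnj (y $ i) * P $ i $ j * y $ j) - of_real a * (\<Sum>i\<in>UNIV. cnj (y $ i) * y $ i)"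
  proof -
    have pw: "cnj (y $ i) * (P - cmat_scale (of_real a) (mat 1)) $ i $ j * y $ j
       = cnj (y $ i) * P $ i $ j * y $ j - (if i = j then of_real a * (cnj (y $ i) * y $ i) else 0)" for i j
      by (auto simp: cmat_scale_def mat_def algebra_simps)
    show ?thesis unfolding pw sum_subtractf by (simp add: sum_distrib_left)
  qed
  finally have h: "0 \<le> Re ((\<Sum>i\<in>UNIV. cnj (y $ i) * (P *v y) $ i) - of_real a * (\<Sum>i\<in>UNIV. cnj (y $ i) * y $ i))"
    unfolding qf_mv .
  have "Re (\<Sum>i\<in>UNIV. cnj (y $ i) * y $ i) = (\<Sum>i\<in>UNIV. (cmod (y $ i))^2)"
    by (simp only: Re_sum Re_cnj_mult_self)
  moreover have "Re ((\<Sum>i\<in>UNIV. cnj (y $ i) * (P *v y) $ i) - of_real a * (\<Sum>i\<in>UNIV. cnj (y $ i) * y $ i))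
     = Re (\<Sum>i\<in>UNIV. cnj (y $ i) * (P *v y) $ i) - a * Re (\<Sum>i\<in>UNIV. cnj (y $ i) * y $ i)"
    by (simp del: Re_sum)
  ultimately show ?thesis using h by (metis diff_ge_0_iff_ge)
qed

lemma amgm_c: 
  fixes a :: real assumes "a > 0"
  shows "Re (cnj y * x) \<le> a / 2 * (cmod y)^2 + (cmod x)^2 / (2 * a)"
proof -
  have "Re (cnj y * x) \<le> cmod (cnj y * x)" by (rule complex_Re_le_cmod)
  also have "\<dots> = cmod y * cmod x" by (simp add: norm_mult)
  also have "\<dots> \<le> a / 2 * (cmod y)^2 + (cmod x)^2 / (2 * a)"
  proof -
    have "0 \<le> (a * cmod y - cmod x)^2" by simp
    hence "2 * a * (cmod y * cmod x) \<le> a^2 * (cmod y)^2 + (cmod x)^2"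
      by (simp add: power2_eq_square algebra_simps)
    thus ?thesis using assms by (simp add: field_simps power2_eq_square)
  qed
  finally show ?thesis .
qed

lemma inv_qf_bound:
  fixes P :: "complex^'m^'m" and a :: real
  assumes a: "a > 0" and L: "loewner_le (cmat_scale (of_real a) (mat 1)) P"
  shows "Re (\<Sum>i\<in>UNIV. \<Sum>j\<in>UNIV. cnj (x $ i) * matrix_inv P $ i $ j * x $ j)
         \<le> (\<Sum>i\<in>UNIV. (cmod (x $ i))^2) / a"
proof -
  have ker: "\<forall>y. P *v y = 0 \<longrightarrow> y = 0"
  proof (intro allI impI)
    fix y assume "P *v y = 0"
    hence "a * (\<Sum>i\<in>UNIV. (cmod (y $ i))^2) \<le> 0" using psd_shift[OF L, of y] by simp
    hence "(\<Sum>i\<in>UNIV. (cmod (y $ i))^2) \<le> 0" using a by (simp add: mult_le_0_iff)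
    hence "(\<Sum>i\<in>UNIV. (cmod (y $ i))^2) = 0" by (simp add: antisym sum_nonneg)
    hence "\<forall>i\<in>UNIV. (cmod (y $ i))^2 = 0" by (subst (asm) sum_nonneg_eq_0_iff) auto
    thus "y = 0" by (simp add: vec_eq_iff)
  qed
  have "invertible P" using ker by (simp add: invertible_left_inverse matrix_left_invertible_ker)
  hence "\<exists>A'. P ** A' = mat 1 \<and> A' ** P = mat 1" unfolding invertible_def .
  hence PI: "P ** matrix_inv P = mat 1" unfolding matrix_inv_def by (rule someI_ex[THEN conjunct1])
  define y where "y = matrix_inv P *v x"
  have Py: "P *v y = x" unfolding y_def by (simp add: matrix_vector_mul_assoc PI)
  define R where "R = Re (\<Sum>i\<in>UNIV. cnj (y $ i) * (P *v y) $ i)"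
  have "(\<Sum>i\<in>UNIV. \<Sum>j\<in>UNIV. cnj (x $ i) * matrix_inv P $ i $ j * x $ j) = (\<Sum>i\<in>UNIV. cnj (x $ i) * y $ i)"
    unfolding qf_mv y_def ..
  also have "\<dots> = cnj (\<Sum>i\<in>UNIV. cnj (y $ i) * (P *v y) $ i)"
    by (simp add: Py mult.commute)
  finally have e1: "Re (\<Sum>i\<in>UNIV. \<Sum>j\<in>UNIV. cnj (x $ i) * matrix_inv P $ i $ j * x $ j) = R"
    unfolding R_def by simp
  have lo: "a * (\<Sum>i\<in>UNIV. (cmod (y $ i))^2) \<le> R" unfolding R_def by (rule psd_shift[OF L])
  have "R = (\<Sum>i\<in>UNIV. Re (cnj (y $ i) * x $ i))" unfolding R_def Py by (simp add: Re_sum)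
  also have "\<dots> \<le> (\<Sum>i\<in>UNIV. a / 2 * (cmod (y $ i))^2 + (cmod (x $ i))^2 / (2 * a))"
    by (intro sum_mono amgm_c a)
  also have "\<dots> = a / 2 * (\<Sum>i\<in>UNIV. (cmod (y $ i))^2) + (\<Sum>i\<in>UNIV. (cmod (x $ i))^2) / (2 * a)"
    by (simp add: sum.distrib sum_distrib_left sum_divide_distrib)
  finally have up: "R \<le> a / 2 * (\<Sum>i\<in>UNIV. (cmod (y $ i))^2) + (\<Sum>i\<in>UNIV. (cmod (x $ i))^2) / (2 * a)" .
  have "R \<le> R / 2 + (\<Sum>i\<in>UNIV. (cmod (x $ i))^2) / (2 * a)" using up lo by linarith
  hence "R \<le> (\<Sum>i\<in>UNIV. (cmod (x $ i))^2) / a" using a by (simp add: field_simps)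
  thus ?thesis using e1 by simp
qed

lemma cont_ipair: "continuous_on UNIV (\<lambda>\<theta>::real^'d. ipair k \<theta>)"
  unfolding ipair_def by (intro continuous_intros)

lemma meas_exp:
  assumes "sets mu = sets (restrict_space borel (torus::(real^'d) set))"
  shows "(\<lambda>\<theta>. exp (c * complex_of_real (ipair (k::int^'d) \<theta>))) \<in> borel_measurable mu"
proof -
  have "continuous_on UNIV (\<lambda>\<theta>::real^'d. exp (c * complex_of_real (ipair k \<theta>)))"
    by (intro continuous_intros cont_ipair)
  hence "(\<lambda>\<theta>::real^'d. exp (c * complex_of_real (ipair k \<theta>))) \<in> borel_measurable borel"
    by (rule borel_measurable_continuous_onI)
  hence "(\<lambda>\<theta>::real^'d. exp (c * complex_of_real (ipair k \<theta>))) \<in> borel_measurable (restrict_space borel torus)"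
    by (rule measurable_restrict_space1)
  thus ?thesis using measurable_cong_sets[OF assms refl] by blast
qed

lemma int_expF:
  assumes "sets mu = sets (restrict_space borel (torus::(real^'d) set))"
    and "integrable mu g" and "Re c = 0"
  shows "integrable mu (\<lambda>\<theta>. exp (c * complex_of_real (ipair (k::int^'d) \<theta>)) * g \<theta>)"
proof (rule Bochner_Integration.integrable_bound[OF assms(2)])
  show "(\<lambda>\<theta>. exp (c * complex_of_real (ipair k \<theta>)) * g \<theta>) \<in> borel_measurable mu"
    using meas_exp[OF assms(1)] borel_measurable_integrable[OF assms(2)] by measurable
  show "AE x in mu. norm (exp (c * complex_of_real (ipair k x)) * g x) \<le> norm (g x)"
    using assms(3) by (simp add: norm_mult norm_exp)
qed


lemma main_bound:
  fixes \<Lambda> :: "(int^'d) set"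
    and \<Sigma> :: "int^'d \<Rightarrow> complex^'m^'m"
    and \<Psi> :: "real^'d \<Rightarrow> complex^'m^'m"
    and \<nu> :: nat and a :: real
  assumes fin: "finite \<Lambda>" and a: "a > 0"
    and PsiL: "\<forall>\<theta>\<in>torus. loewner_le (cmat_scale (of_real a) (mat 1)) (\<Psi> \<theta>)"
    and sets_mu: "sets mu = sets (restrict_space borel torus)"
    and intF: "\<forall>i j. integrable mu (\<lambda>\<theta>. F \<theta> $ i $ j)"
    and psdF: "\<forall>\<theta>\<in>torus. psd_mat (F \<theta>)"
    and mom: "\<forall>k\<in>\<Lambda>. \<forall>i j.
            (LINT \<theta>|mu. exp (\<i> * complex_of_real (ipair k \<theta>)) * F \<theta> $ i $ j) = \<Sigma> k $ i $ j"
    and QL: "Q \<in> Lplus \<Lambda> \<nu> \<Psi>"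
  shows "Re (pairing \<Lambda> Q \<Sigma>) \<ge> - (real \<nu> / a) * (\<integral>\<theta>. (\<Sum>i\<in>UNIV. Re (F \<theta> $ i $ i)) \<partial>mu)"
proof -
  have space_mu: "space mu = torus"
    using sets_eq_imp_space_eq[OF sets_mu] by (simp add: space_restrict_space)
  define E where "E (k::int^'d) (\<theta>::real^'d) = exp (- \<i> * complex_of_real (ipair k \<theta>))" for k \<theta>
  define T where "T (\<theta>::real^'d) = (\<Sum>i\<in>UNIV. \<Sum>l\<in>UNIV. Qfun \<Lambda> Q \<theta> $ i $ l * F \<theta> $ l $ i)" for \<theta>
  have herm: "F \<theta> $ i $ j = cnj (F \<theta> $ j $ i)" if "\<theta> \<in> torus" for \<theta> i j
  proof -
    have "adjoint_mat (F \<theta>) = F \<theta>" using psdF that unfolding psd_mat_def hermitian_mat_def by blast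
    hence "adjoint_mat (F \<theta>) $ i $ j = F \<theta> $ i $ j" by simp
    thus ?thesis unfolding adjoint_mat_def by simp
  qed
  have intEF: "integrable mu (\<lambda>\<theta>. E k \<theta> * F \<theta> $ i $ j)" for k i j
    unfolding E_def using int_expF[OF sets_mu, of "\<lambda>\<theta>. F \<theta> $ i $ j" "- \<i>"] intF by simp
  have Qc: "Qfun \<Lambda> Q \<theta> $ i $ l = (\<Sum>k\<in>\<Lambda>. E k \<theta> * Q k $ i $ l)" for \<theta> i l
    unfolding Qfun_def E_def cmat_scale_def by simp
  have Teq: "T \<theta> = (\<Sum>k\<in>\<Lambda>. \<Sum>i\<in>UNIV. \<Sum>l\<in>UNIV. Q k $ i $ l * (E k \<theta> * F \<theta> $ l $ i))" for \<theta>
    unfolding T_def Qc sum_distrib_right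
    by (subst sum.swap, rule sum.cong, simp, subst sum.swap) (simp add: algebra_simps)
  have intT: "integrable mu T"
    unfolding Teq by (intro Bochner_Integration.integrable_sum integrable_mult_right intEF)
  have pair_eq: "pairing \<Lambda> Q \<Sigma> = (\<integral>\<theta>. T \<theta> \<partial>mu)"
  proof -
    have cS: "cnj (\<Sigma> k $ i $ l) = (\<integral>\<theta>. E k \<theta> * F \<theta> $ l $ i \<partial>mu)" if k: "k \<in> \<Lambda>" for k i l
    proof -
      have "cnj (\<Sigma> k $ i $ l) = (\<integral>\<theta>. cnj (exp (\<i> * complex_of_real (ipair k \<theta>)) * F \<theta> $ i $ l) \<partial>mu)"
      proof -
        have m: "\<Sigma> k $ i $ l = (\<integral>\<theta>. exp (\<i> * complex_of_real (ipair k \<theta>)) * F \<theta> $ i $ l \<partial>mu)"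
          using mom k by simp
        show ?thesis unfolding Bochner_Integration.integral_cnj m ..
      qed
      also have "\<dots> = (\<integral>\<theta>. E k \<theta> * F \<theta> $ l $ i \<partial>mu)"
        by (rule Bochner_Integration.integral_cong[OF refl])
           (simp add: E_def space_mu herm[of _ l i] exp_cnj)
      finally show ?thesis .
    qed
    have "pairing \<Lambda> Q \<Sigma> = (\<Sum>k\<in>\<Lambda>. \<Sum>i\<in>UNIV. \<Sum>l\<in>UNIV. Q k $ i $ l * cnj (\<Sigma> k $ i $ l))"
      unfolding pairing_def trace_def matrix_matrix_mult_def adjoint_mat_def by simp
    also have "\<dots> = (\<Sum>k\<in>\<Lambda>. \<Sum>i\<in>UNIV. \<Sum>l\<in>UNIV. (\<integral>\<theta>. Q k $ i $ l * (E k \<theta> * F \<theta> $ l $ i) \<partial>mu))"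
      by (intro sum.cong refl) (simp add: cS)
    also have "\<dots> = (\<integral>\<theta>. T \<theta> \<partial>mu)"
      unfolding Teq
      by (simp add: Bochner_Integration.integral_sum integrable_mult_right intEF
            Bochner_Integration.integrable_sum)
    finally show ?thesis .
  qed
  define c where "c = real \<nu> / a"
  have pw: "Re (T \<theta>) \<ge> - c * (\<Sum>i\<in>UNIV. Re (F \<theta> $ i $ i))" if th: "\<theta> \<in> torus" for \<theta>
  proof -
    define B where "B i j = Qfun \<Lambda> Q \<theta> $ i $ j + (if i = j then complex_of_real c else 0)" for i j
    have qfB: "0 \<le> Re (\<Sum>i\<in>UNIV. \<Sum>j\<in>UNIV. cnj (v $ i) * B i j * v $ j)" for v
    proof -
      define G where "G = cmat_scale (of_nat \<nu>) (matrix_inv (\<Psi> \<theta>)) + Qfun \<Lambda> Q \<theta>"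
      have "psd_mat G" using QL th unfolding Lplus_def G_def by blast
      hence g0: "0 \<le> Re (\<Sum>i\<in>UNIV. \<Sum>j\<in>UNIV. cnj (v $ i) * G $ i $ j * v $ j)"
        unfolding psd_mat_def by blast
      define X where "X = (\<Sum>i\<in>UNIV. (cmod (v $ i))^2)"
      define qP where "qP = (\<Sum>i\<in>UNIV. \<Sum>j\<in>UNIV. cnj (v $ i) * matrix_inv (\<Psi> \<theta>) $ i $ j * v $ j)"
      define qQ where "qQ = (\<Sum>i\<in>UNIV. \<Sum>j\<in>UNIV. cnj (v $ i) * Qfun \<Lambda> Q \<theta> $ i $ j * v $ j)"
      have bP: "Re qP \<le> X / a" unfolding qP_def X_def
        by (rule inv_qf_bound[OF a]) (use PsiL th in blast)
      have eG: "(\<Sum>i\<in>UNIV. \<Sum>j\<in>UNIV. cnj (v $ i) * G $ i $ j * v $ j) = of_nat \<nu> * qP + qQ"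
        unfolding G_def qP_def qQ_def cmat_scale_def
        by (simp add: algebra_simps sum.distrib sum_distrib_left)
      have eB: "(\<Sum>i\<in>UNIV. \<Sum>j\<in>UNIV. cnj (v $ i) * B i j * v $ j) = qQ + of_real c * (\<Sum>i\<in>UNIV. cnj (v $ i) * v $ i)"
      proof -
        have pw: "cnj (v $ i) * B i j * v $ j = cnj (v $ i) * Qfun \<Lambda> Q \<theta> $ i $ j * v $ j + (if i = j then of_real c * (cnj (v $ i) * v $ i) else 0)" for i j
          unfolding B_def by (auto simp: algebra_simps)
        show ?thesis unfolding pw sum.distrib qQ_def by (simp add: sum_distrib_left)
      qed
      have rX: "Re (\<Sum>i\<in>UNIV. cnj (v $ i) * v $ i) = X"
        unfolding X_def by (simp only: Re_sum Re_cnj_mult_self)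
      have "0 \<le> real \<nu> * Re qP + Re qQ" using g0 unfolding eG by simp
      moreover have "real \<nu> * Re qP \<le> real \<nu> * (X / a)" using bP by (intro mult_left_mono) auto
      moreover have "Re (\<Sum>i\<in>UNIV. \<Sum>j\<in>UNIV. cnj (v $ i) * B i j * v $ j) = Re qQ + c * X"
        unfolding eB using rX by simp
      moreover have "real \<nu> * (X / a) = c * X" unfolding c_def by simp
      ultimately show ?thesis by linarith
    qed
    have Bhyp: "0 \<le> Re (\<Sum>i\<in>J. \<Sum>j\<in>J. cnj (x i) * B i j * x j)" if "finite J" for J x
    proof -
      define v where "v = (\<chi> i. if i \<in> J then x i else 0)"
      have "(\<Sum>i\<in>UNIV. \<Sum>j\<in>UNIV. cnj (v $ i) * B i j * v $ j) = (\<Sum>i\<in>J. \<Sum>j\<in>J. cnj (x i) * B i j * x j)"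
        unfolding v_def
        by (intro sum.mono_neutral_cong_right) (auto intro!: sum.mono_neutral_cong_right)
      thus ?thesis using qfB[of v] by simp
    qed
    have Fpsd: "0 \<le> Re (\<Sum>i\<in>UNIV. \<Sum>j\<in>UNIV. cnj (x i) * F \<theta> $ i $ j * x j)" for x
      using psdF th unfolding psd_mat_def
      by (metis (no_types, lifting) vec_lambda_beta sum.cong)
    have "0 \<le> Re (\<Sum>i\<in>UNIV. \<Sum>j\<in>UNIV. B i j * F \<theta> $ j $ i)"
      by (rule trace_nonneg_psd[where F = "\<lambda>i j. F \<theta> $ i $ j", OF finite Bhyp herm[OF th] Fpsd])
    also have "(\<Sum>i\<in>UNIV. \<Sum>j\<in>UNIV. B i j * F \<theta> $ j $ i) = T \<theta> + of_real c * (\<Sum>i\<in>UNIV. F \<theta> $ i $ i)"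
    proof -
      have pw: "B i j * F \<theta> $ j $ i = Qfun \<Lambda> Q \<theta> $ i $ j * F \<theta> $ j $ i + (if i = j then of_real c * F \<theta> $ i $ i else 0)" for i j
        unfolding B_def by (auto simp: algebra_simps)
      show ?thesis unfolding pw sum.distrib T_def by (simp add: sum_distrib_left)
    qed
    finally show ?thesis by (simp add: Re_sum)
  qed
  have "(\<integral>\<theta>. - c * (\<Sum>i\<in>UNIV. Re (F \<theta> $ i $ i)) \<partial>mu) \<le> (\<integral>\<theta>. Re (T \<theta>) \<partial>mu)"
    by (intro integral_mono) (use intT intF pw space_mu in auto)
  also have "(\<integral>\<theta>. Re (T \<theta>) \<partial>mu) = Re (pairing \<Lambda> Q \<Sigma>)"
    unfolding pair_eq using integral_bounded_linear[OF bounded_linear_Re intT] by simp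
  finally show ?thesis unfolding c_def by simp
qed


theorem lemma5p4:
  fixes \<Lambda> :: "(int^'d) set"
    and \<Sigma> :: "int^'d \<Rightarrow> complex^'m^'m"
    and \<Psi> :: "real^'d \<Rightarrow> complex^'m^'m"
    and \<nu> :: nat
  assumes "\<nu> \<ge> 2"
    and "finite \<Lambda>" and "0 \<in> \<Lambda>" and "\<forall>k\<in>\<Lambda>. - k \<in> \<Lambda>"
    and "herm_family \<Lambda> \<Sigma>"
    and "\<forall>i j. rational_on_torus (\<lambda>\<theta>. \<Psi> \<theta> $ i $ j)"
    and "\<exists>a b. 0 < a \<and> a < b \<and>
           (\<forall>\<theta>\<in>torus. loewner_le (cmat_scale (of_real a) (mat 1)) (\<Psi> \<theta>) \<and>
                      loewner_le (\<Psi> \<theta>) (cmat_scale (of_real b) (mat 1)))"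
    and "feasible \<Lambda> \<Sigma>"
  shows "\<exists>\<alpha>::real. \<forall>Q\<in>Lplus \<Lambda> \<nu> \<Psi>. Re (pairing \<Lambda> Q \<Sigma>) \<ge> \<alpha>"
proof -
  obtain a b where a: "0 < a" and ab: "\<forall>\<theta>\<in>torus. loewner_le (cmat_scale (of_real a) (mat 1)) (\<Psi> \<theta>)"
    using assms(7) by blast
  obtain mu :: "(real^'d) measure" and F :: "real^'d \<Rightarrow> complex^'m^'m" where
    s: "sets mu = sets (restrict_space borel torus)"
    and i: "\<forall>i j. integrable mu (\<lambda>\<theta>. F \<theta> $ i $ j)"
    and p: "\<forall>\<theta>\<in>torus. psd_mat (F \<theta>)"
    and m: "\<forall>k\<in>\<Lambda>. \<forall>i j.
            (LINT \<theta>|mu. exp (\<i> * complex_of_real (ipair k \<theta>)) * F \<theta> $ i $ j) = \<Sigma> k $ i $ j"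
    using assms(8) unfolding feasible_def by blast
  show ?thesis
    using main_bound[OF assms(2) a ab s i p m] by blast
qed

end
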